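(* Consider AdaFTRL with $1/2$-Tsallis entropy for $K$-armed bandits relying on a known upper bound $M$ on the payoffs (described in the context). For all $m\in\mathbb{R}$ with $m\le M$, all oblivious sequences $y_1,y_2,\dots$ in $[m,M]^K$ and all $T\ge1$, \[ R_T(y_{1:T})\le 4(M-m)\sqrt{KT}+2(M-m). \]
   Context: Oblivious adversarial $K$-armed bandits ($K\ge2$): reward vectors $y_t\in[m,M]^K$ fixed beforehand; at round $t$ the player draws $A_t\sim p_t$ and observes only $y_{t,A_t}$; $R_T(y_{1:T})=\max_a\sum_{t=1}^Ty_{t,a}-\mathbb{E}[\sum_{t=1}^Ty_{t,A_t}]$. The player knows $M$ but not $m$. Let $\mathcal{S}$ be the probability simplex over $[K]$, $H_{1/2}(p)=-\sum_{a=1}^K2\sqrt{p_a}$ (for $p\in[0,\infty)^K$), and for $q$ with all $q_a>0$, $B(p,q)=H_{1/2}(p)-H_{1/2}(q)-\langle\nabla H_{1/2}(q),p-q\rangle=\sum_a(\sqrt{p_a}-\sqrt{q_a})^2/\sqrt{q_a}$. Algorithm (input $M$): $\eta_1=+\infty$, $p_1=(1/K,\dots,1/K)$. For $t\ge1$: draw $A_t\sim p_t$; observe $y_{t,A_t}$; set $\widehat y_{t,a}=\frac{y_{t,a}-M}{p_{t,a}}\mathbf{1}\{A_t=a\}+M$; compute $\delta_t=\max_{p\in\mathcal{S}}\{\langle p_t-p,-\widehat y_t\rangle-B(p,p_t)/\eta_t\}$ (with the convention $B(p,p_t)/\eta_t=0$ when $\eta_t=+\infty$); set $\eta_{t+1}=2(\sqrt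 K-1)/\sum_{s=1}^t\delta_s$; set $p_{t+1}\in\arg\min_{p\in\mathcal{S}}\bigl\{-\sum_{a}p_a\sum_{s=1}^t\widehat y_{s,a}-\frac1{\eta_{t+1}}\sum_a2\sqrt{p_a}\bigr\}$. *)

theory Defs
  imports Complex_Main
begin

text \<open>Arms are 0..K-1; rounds are 1,2,...; a reward sequence is y :: nat => nat => real
  with y t a the reward of arm a at round t.  A history is the list of actions played so far:
  h ! (s-1) = A_s.  A policy P maps a history of length t-1 to the distribution p_t.\<close>

definition simplex :: "nat \<Rightarrow> (nat \<Rightarrow> real) set" where
  "simplex K = {p. (\<forall>a<K. 0 \<le> p a) \<and> (\<Sum>a<K. p a) = 1}"

text \<open>Bregman divergence of the 1/2-Tsallis entropy H(p) = - sum 2 sqrt(p_a).\<close>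
definition bregH :: "nat \<Rightarrow> (nat \<Rightarrow> real) \<Rightarrow> (nat \<Rightarrow> real) \<Rightarrow> real" where
  "bregH K p q = (\<Sum>a<K. (sqrt (p a) - sqrt (q a))^2 / sqrt (q a))"

text \<open>Importance-weighted estimate at round s (1 \<le> s \<le> length h).\<close>
definition yhat :: "(nat list \<Rightarrow> nat \<Rightarrow> real) \<Rightarrow> real \<Rightarrow> (nat \<Rightarrow> nat \<Rightarrow> real)
    \<Rightarrow> nat list \<Rightarrow> nat \<Rightarrow> nat \<Rightarrow> real" where
  "yhat P M y h s a =
     (if a = h ! (s - 1) then (y s a - M) / P (take (s - 1) h) a else 0) + M"

text \<open>delta_t for a history h of length t \<ge> 1, given lam = 1/eta_t
  (lam = 0 encodes eta_t = +infinity, matching the convention B/eta = 0).\<close>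
definition deltaL :: "(nat list \<Rightarrow> nat \<Rightarrow> real) \<Rightarrow> nat \<Rightarrow> real \<Rightarrow> (nat \<Rightarrow> nat \<Rightarrow> real)
    \<Rightarrow> real \<Rightarrow> nat list \<Rightarrow> real" where
  "deltaL P K M y lam h =
     (SUP q\<in>simplex K. (\<Sum>a<K. (P (butlast h) a - q a) * (- yhat P M y h (length h) a))
        - lam * bregH K q (P (butlast h)))"

text \<open>invlr P K M y h t = 1/eta_{t+1} = (sum_{s=1}^t delta_s) / (2(sqrt K - 1)).\<close>
primrec invlr :: "(nat list \<Rightarrow> nat \<Rightarrow> real) \<Rightarrow> nat \<Rightarrow> real \<Rightarrow> (nat \<Rightarrow> nat \<Rightarrow> real)
    \<Rightarrow> nat list \<Rightarrow> nat \<Rightarrow> real" where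
  "invlr P K M y h 0 = 0"
| "invlr P K M y h (Suc t) = invlr P K M y h t
     + deltaL P K M y (invlr P K M y h t) (take (Suc t) h) / (2 * (sqrt (real K) - 1))"

text \<open>FTRL objective defining p_{t+1} after history h of length t.\<close>
definition ftrl_obj :: "(nat list \<Rightarrow> nat \<Rightarrow> real) \<Rightarrow> nat \<Rightarrow> real \<Rightarrow> (nat \<Rightarrow> nat \<Rightarrow> real)
    \<Rightarrow> nat list \<Rightarrow> (nat \<Rightarrow> real) \<Rightarrow> real" where
  "ftrl_obj P K M y h q =
     - (\<Sum>a<K. q a * (\<Sum>s=1..length h. yhat P M y h s a))
     - invlr P K M y h (length h) * (\<Sum>a<K. 2 * sqrt (q a))"

text \<open>P is a run of AdaFTRL with 1/2-Tsallis entropy (any tie-breaking in the argmin).\<close>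
definition adaftrl :: "(nat list \<Rightarrow> nat \<Rightarrow> real) \<Rightarrow> nat \<Rightarrow> real \<Rightarrow> (nat \<Rightarrow> nat \<Rightarrow> real) \<Rightarrow> bool" where
  "adaftrl P K M y \<longleftrightarrow>
     (\<forall>a<K. P [] a = 1 / real K) \<and>
     (\<forall>h. set h \<subseteq> {..<K} \<and> length h \<ge> 1 \<longrightarrow>
        P h \<in> simplex K \<and> (\<forall>q\<in>simplex K. ftrl_obj P K M y h (P h) \<le> ftrl_obj P K M y h q))"

definition histories :: "nat \<Rightarrow> nat \<Rightarrow> nat list set" where
  "histories K T = {h. length h = T \<and> set h \<subseteq> {..<K}}"

text \<open>E[sum_{t=1}^T y_{t,A_t}] where A_{s+1} ~ P (take s h).\<close>
definition exp_reward :: "(nat list \<Rightarrow> nat \<Rightarrow> real) \<Rightarrow> nat \<Rightarrow> (nat \<Rightarrow> nat \<Rightarrow> real) \<Rightarrow> nat \<Rightarrow> real" where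
  "exp_reward P K y T =
     (\<Sum>h\<in>histories K T. (\<Prod>s<T. P (take s h) (h ! s)) * (\<Sum>s<T. y (Suc s) (h ! s)))"

definition regret :: "(nat list \<Rightarrow> nat \<Rightarrow> real) \<Rightarrow> nat \<Rightarrow> (nat \<Rightarrow> nat \<Rightarrow> real) \<Rightarrow> nat \<Rightarrow> real" where
  "regret P K y T = (MAX a\<in>{..<K}. (\<Sum>t=1..T. y t a)) - exp_reward P K y T"

end

theory Submission
  imports Defs
begin


lemma simplex_nonneg: "p \<in> simplex K \<Longrightarrow> a < K \<Longrightarrow> 0 \<le> p a"
  by (simp add: simplex_def)

lemma simplex_sum: "p \<in> simplex K \<Longrightarrow> (\<Sum>a<K. p a) = 1"
  by (simp add: simplex_def)

lemma vertex_simplex: "u < K \<Longrightarrow> (\<lambda>a. if a = u then 1 else 0) \<in> simplex K"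
  by (simp add: simplex_def)

lemma sqrt_le_amgm:
  fixes x c :: real
  assumes "x \<ge> 0" "c > 0"
  shows "sqrt x \<le> (x * c + 1 / c) / 2"
proof -
  have "(sqrt x * c - 1)^2 \<ge> 0" by simp
  hence "2 * sqrt x * c \<le> x * c^2 + 1"
    using assms by (simp add: power2_eq_square algebra_simps)
  hence "(2 * sqrt x * c) / c \<le> (x * c^2 + 1) / c"
    using assms by (intro divide_right_mono) auto
  thus ?thesis using assms by (simp add: field_simps power2_eq_square)
qed

lemma sqrt_sum_le:
  assumes "p \<in> simplex K" "K \<ge> 1"
  shows "(\<Sum>a<K. sqrt (p a)) \<le> sqrt K"
proof -
  have c: "sqrt K > 0" using assms by simp
  have "(\<Sum>a<K. sqrt (p a)) \<le> (\<Sum>a<K. (p a * sqrt K + 1 / sqrt K) / 2)"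
    by (rule sum_mono) (use assms c sqrt_le_amgm in \<open>auto simp: simplex_def\<close>)
  also have "\<dots> = ((\<Sum>a<K. p a) * sqrt K + K / sqrt K) / 2"
    by (simp add: sum_divide_distrib[symmetric] sum.distrib sum_distrib_right)
  also have "\<dots> = sqrt K"
    using assms c by (simp add: simplex_def field_simps)
  finally show ?thesis .
qed

lemma breg_nonneg: "(\<forall>a<K. 0 \<le> p a) \<Longrightarrow> 0 \<le> bregH K q p"
  unfolding bregH_def by (auto intro!: sum_nonneg divide_nonneg_nonneg)

lemma breg_self: "bregH K p p = 0"
  unfolding bregH_def by simp

lemma sum_two_change:
  fixes f g :: "nat \<Rightarrow> real"
  assumes "a < K" "b < K" "a \<noteq> b" "\<forall>c<K. c \<noteq> a \<longrightarrow> c \<noteq> b \<longrightarrow> f c = g c"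
  shows "(\<Sum>c<K. f c) = (\<Sum>c<K. g c) + (f a - g a) + (f b - g b)"
proof -
  have "(\<Sum>c\<in>{a,b}. f c - g c) = (\<Sum>c<K. f c - g c)"
    by (rule sum.mono_neutral_left) (use assms in auto)
  moreover have "(\<Sum>c\<in>{a,b}. f c - g c) = (f a - g a) + (f b - g b)"
    using assms by simp
  ultimately show ?thesis by (simp add: sum_subtractf)
qed



lemma sqrt_diff_le:
  fixes u e :: real
  assumes "u > 0" "0 \<le> e" "e \<le> u"
  shows "sqrt u - sqrt (u - e) \<le> e / sqrt u"
proof -
  have su: "sqrt u > 0" using assms by simp
  have sv: "sqrt (u - e) \<ge> 0" using assms by simp
  have "(sqrt u - sqrt (u - e)) * (sqrt u + sqrt (u - e)) = e"
    using assms by (simp add: algebra_simps)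
  moreover have "(sqrt u - sqrt (u - e)) * sqrt u \<le> (sqrt u - sqrt (u - e)) * (sqrt u + sqrt (u - e))"
  proof (rule mult_left_mono)
    show "sqrt u \<le> sqrt u + sqrt (u - e)" using sv by simp
    show "0 \<le> sqrt u - sqrt (u - e)" using assms by simp
  qed
  ultimately have "(sqrt u - sqrt (u - e)) * sqrt u \<le> e" by simp
  thus ?thesis using su by (simp add: field_simps)
qed

lemma ftrl_pos:
  fixes Y :: "nat \<Rightarrow> real" and F :: "(nat \<Rightarrow> real) \<Rightarrow> real"
  assumes p: "p \<in> simplex K" and lam: "lam > 0" and a: "a < K"
    and opt: "\<forall>q\<in>simplex K. F p \<le> F q"
    and F: "F = (\<lambda>q. - (\<Sum>c<K. q c * Y c) - lam * (\<Sum>c<K. 2 * sqrt (q c)))"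
  shows "p a > 0"
proof (rule ccontr)
  assume "\<not> p a > 0"
  hence pa: "p a = 0" using simplex_nonneg[OF p a] by simp
  obtain b where b: "b < K" "p b > 0"
  proof (rule ccontr)
    assume "\<not> thesis"
    hence "\<forall>b<K. p b \<le> 0" using that by force
    hence "(\<Sum>b<K. p b) \<le> 0" by (intro sum_nonpos) auto
    thus False using simplex_sum[OF p] by simp
  qed
  have ab: "a \<noteq> b" using pa b by auto
  define c0 where "c0 = \<bar>Y a - Y b\<bar> + 2 * lam / sqrt (p b) + 1"
  have c0: "c0 > 0"
  proof -
    have "2 * lam / sqrt (p b) > 0" using b lam by simp
    thus ?thesis unfolding c0_def using abs_ge_zero[of "Y a - Y b"] by linarith
  qed
  define e where "e = min (p b) ((lam / c0)^2)"
  have e0: "e > 0" using b lam c0 by (simp add: e_def)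
  have eb: "e \<le> p b" by (simp add: e_def)
  have se: "sqrt e \<le> lam / c0"
  proof -
    have "e \<le> (lam / c0)^2" by (simp add: e_def)
    hence "sqrt e \<le> sqrt ((lam / c0)^2)" using real_sqrt_le_mono by blast
    thus ?thesis using lam c0 by simp
  qed
  define q where "q = (\<lambda>c. if c = a then e else if c = b then p b - e else p c)"
  have qs: "q \<in> simplex K"
  proof -
    have "(\<Sum>c<K. q c) = (\<Sum>c<K. p c) + (q a - p a) + (q b - p b)"
      by (rule sum_two_change) (use a b ab in \<open>auto simp: q_def\<close>)
    hence "(\<Sum>c<K. q c) = 1" using simplex_sum[OF p] pa ab by (simp add: q_def)
    moreover have "\<forall>c<K. 0 \<le> q c" using simplex_nonneg[OF p] e0 eb by (auto simp: q_def)
    ultimately show ?thesis by (simp add: simplex_def)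
  qed
  have s1: "(\<Sum>c<K. q c * Y c) = (\<Sum>c<K. p c * Y c) + (q a * Y a - p a * Y a) + (q b * Y b - p b * Y b)"
    by (rule sum_two_change) (use a b ab in \<open>auto simp: q_def\<close>)
  have s2: "(\<Sum>c<K. 2 * sqrt (q c)) = (\<Sum>c<K. 2 * sqrt (p c)) + (2 * sqrt (q a) - 2 * sqrt (p a)) + (2 * sqrt (q b) - 2 * sqrt (p b))"
    by (rule sum_two_change) (use a b ab in \<open>auto simp: q_def\<close>)
  have qa: "q a = e" "q b = p b - e" using ab by (auto simp: q_def)
  have s1': "(\<Sum>c<K. q c * Y c) = (\<Sum>c<K. p c * Y c) + e * Y a - e * Y b"
    using s1 unfolding qa pa by (simp add: algebra_simps)
  have s2': "(\<Sum>c<K. 2 * sqrt (q c)) = (\<Sum>c<K. 2 * sqrt (p c)) + 2 * sqrt e + 2 * sqrt (p b - e) - 2 * sqrt (p b)"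
    using s2 unfolding qa pa by (simp add: algebra_simps)
  have "F q - F p = - (e * Y a - e * Y b) - lam * (2 * sqrt e - 2 * (sqrt (p b) - sqrt (p b - e)))"
    unfolding F by (simp only: s1' s2') (simp add: algebra_simps)
  also have "\<dots> \<le> e * \<bar>Y a - Y b\<bar> - 2 * lam * sqrt e + 2 * lam * (e / sqrt (p b))"
  proof -
    have "sqrt (p b) - sqrt (p b - e) \<le> e / sqrt (p b)"
      using sqrt_diff_le[of "p b" e] b e0 eb by simp
    hence "2 * lam * (sqrt (p b) - sqrt (p b - e)) \<le> 2 * lam * (e / sqrt (p b))"
      using lam by (intro mult_left_mono) auto
    moreover have "- (e * Y a - e * Y b) \<le> e * \<bar>Y a - Y b\<bar>"
    proof -
      have "e * (Y b - Y a) \<le> e * \<bar>Y a - Y b\<bar>" using e0 by (intro mult_left_mono) auto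
      thus ?thesis by (simp add: algebra_simps)
    qed
    ultimately show ?thesis by (simp add: algebra_simps)
  qed
  also have "\<dots> = e * (c0 - 1) - 2 * lam * sqrt e"
    by (simp add: c0_def algebra_simps)
  also have "\<dots> < e * c0 - 2 * lam * sqrt e" using e0 by simp
  also have "e * c0 \<le> lam * sqrt e"
  proof -
    have "e * c0 = sqrt e * (sqrt e * c0)" proof -
      have ee: "sqrt e * sqrt e = e" using e0 by simp
      show ?thesis using e0 by (simp add: mult.assoc[symmetric] ee)
    qed
    also have "\<dots> \<le> sqrt e * lam"
      using se c0 e0 by (intro mult_left_mono) (auto simp: field_simps)
    finally show ?thesis by (simp add: mult.commute)
  qed
  hence "e * c0 - 2 * lam * sqrt e \<le> - lam * sqrt e" by simp
  also have "\<dots> \<le> 0" using lam e0 by simp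
  finally have "F q < F p" by simp
  thus False using opt qs by force
qed



lemma breg_term_identity:
  fixes x p Y lam :: real
  assumes "p > 0" "x \<ge> 0"
  shows "(- (x * Y) - lam * (2 * sqrt x)) - (- (p * Y) - lam * (2 * sqrt p))
          - lam * ((sqrt x - sqrt p)^2 / sqrt p) = (x - p) * (- Y - lam / sqrt p)"
proof -
  define s where "s = sqrt p"
  define r where "r = sqrt x"
  have s: "s > 0" "p = s^2" using assms by (auto simp: s_def)
  have r: "r \<ge> 0" "x = r^2" using assms by (auto simp: r_def)
  show ?thesis unfolding s_def[symmetric] r_def[symmetric] using s r
    by (simp add: field_simps power2_eq_square)
qed

lemma sqdiff_le:
  fixes x p :: real
  assumes "p > 0" "x \<ge> 0"
  shows "(sqrt x - sqrt p)^2 / sqrt p \<le> (x - p)^2 / (p * sqrt p)"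
proof -
  have sp: "sqrt p > 0" using assms by simp
  have "(sqrt x - sqrt p)^2 * (sqrt x + sqrt p)^2 = (x - p)^2"
    using assms by (simp add: power_mult_distrib[symmetric] algebra_simps)
  moreover have "p \<le> (sqrt x + sqrt p)^2"
  proof -
    have "sqrt p ^2 \<le> (sqrt x + sqrt p)^2"
      using assms by (intro power_mono) auto
    thus ?thesis using assms by simp
  qed
  ultimately have "(sqrt x - sqrt p)^2 * p \<le> (x - p)^2"
    by (metis mult_left_mono zero_le_power2)
  hence "(sqrt x - sqrt p)^2 \<le> (x - p)^2 / p" using assms by (simp add: field_simps)
  hence "(sqrt x - sqrt p)^2 / sqrt p \<le> ((x - p)^2 / p) / sqrt p"
    using sp by (intro divide_right_mono) auto
  thus ?thesis by simp
qed

lemma eps_nonneg: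
  fixes d k :: real
  assumes "k \<ge> 0" "\<And>e. 0 < e \<Longrightarrow> e \<le> 1 \<Longrightarrow> - (e * k) \<le> d"
  shows "d \<ge> 0"
proof (rule ccontr)
  assume "\<not> d \<ge> 0"
  hence d: "d < 0" by simp
  show False
  proof (cases "k = 0")
    case True thus False using assms(2)[of 1] d by simp
  next
    case False
    hence k: "k > 0" using assms by simp
    define e where "e = min 1 (- d / (2 * k))"
    have "- d / (2 * k) > 0" using d k by (intro divide_pos_pos) auto
    hence e: "0 < e" "e \<le> 1" by (auto simp: e_def)
    have "e * k \<le> (- d / (2 * k)) * k" using k by (intro mult_right_mono) (auto simp: e_def)
    also have "\<dots> = - d / 2" using k by simp
    finally have "- (e * k) \<ge> d / 2" by simp
    hence "d / 2 \<le> d" using assms(2)[OF e] by simp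
    thus False using d by simp
  qed
qed

lemma ftrl_breg:
  fixes Y :: "nat \<Rightarrow> real" and F :: "(nat \<Rightarrow> real) \<Rightarrow> real"
  assumes p: "p \<in> simplex K" and lam: "lam \<ge> 0"
    and opt: "\<forall>q\<in>simplex K. F p \<le> F q"
    and F: "F = (\<lambda>q. - (\<Sum>c<K. q c * Y c) - lam * (\<Sum>c<K. 2 * sqrt (q c)))"
    and q: "q \<in> simplex K"
  shows "F p + lam * bregH K q p \<le> F q"
proof (cases "lam = 0")
  case True thus ?thesis using opt q by simp
next
  case False
  hence lam: "lam > 0" using lam by simp
  have pp: "\<forall>a<K. p a > 0" using ftrl_pos[OF p lam _ opt F] by blast
  define g where "g = (\<lambda>a. - Y a - lam / sqrt (p a))"
  have ident: "F x - F p - lam * bregH K x p = (\<Sum>a<K. (x a - p a) * g a)"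
    if x: "\<forall>a<K. x a \<ge> 0" for x
  proof -
    have "F x - F p - lam * bregH K x p =
      (\<Sum>a<K. (- (x a * Y a) - lam * (2 * sqrt (x a))) - (- (p a * Y a) - lam * (2 * sqrt (p a)))
          - lam * ((sqrt (x a) - sqrt (p a))^2 / sqrt (p a)))"
      unfolding F bregH_def
      by (simp add: sum_subtractf sum_negf sum_distrib_left sum.distrib)
    also have "\<dots> = (\<Sum>a<K. (x a - p a) * g a)"
    proof (rule sum.cong[OF refl])
      fix a assume "a \<in> {..<K}"
      thus "- (x a * Y a) - lam * (2 * sqrt (x a)) - (- (p a * Y a) - lam * (2 * sqrt (p a)))
          - lam * ((sqrt (x a) - sqrt (p a))^2 / sqrt (p a)) = (x a - p a) * g a"
        using breg_term_identity[of "p a" "x a" "Y a" lam] pp x by (simp add: g_def)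
    qed
    finally show ?thesis .
  qed
  define d where "d = (\<Sum>a<K. (q a - p a) * g a)"
  define C where "C = (\<Sum>a<K. (q a - p a)^2 / (p a * sqrt (p a)))"
  have C0: "C \<ge> 0" unfolding C_def using pp by (auto intro!: sum_nonneg)
  have "d \<ge> 0"
  proof (rule eps_nonneg[of "lam * C"])
    show "0 \<le> lam * C" using lam C0 by simp
  next
    fix e :: real assume e: "0 < e" "e \<le> 1"
    define x where "x = (\<lambda>a. p a + e * (q a - p a))"
    have xnn: "\<forall>a<K. x a \<ge> 0"
    proof (intro allI impI)
      fix a assume "a < K"
      hence "p a \<ge> 0" "q a \<ge> 0" using p q by (auto simp: simplex_def)
      hence "0 \<le> (1 - e) * p a + e * q a" using e by (intro add_nonneg_nonneg mult_nonneg_nonneg) auto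
      thus "x a \<ge> 0" by (simp add: x_def algebra_simps)
    qed
    have "(\<Sum>a<K. x a) = (\<Sum>a<K. p a) + e * ((\<Sum>a<K. q a) - (\<Sum>a<K. p a))"
      by (simp add: x_def sum.distrib sum_distrib_left[symmetric] sum_subtractf)
    hence "(\<Sum>a<K. x a) = 1" using p q by (simp add: simplex_def)
    hence xs: "x \<in> simplex K" using xnn by (simp add: simplex_def)
    have "F x - F p = lam * bregH K x p + (\<Sum>a<K. (x a - p a) * g a)"
      using ident[OF xnn] by simp
    also have "(\<Sum>a<K. (x a - p a) * g a) = e * d"
      by (simp add: x_def d_def sum_distrib_left mult.assoc)
    also have "bregH K x p \<le> e^2 * C"
    proof -
      have "bregH K x p \<le> (\<Sum>a<K. (x a - p a)^2 / (p a * sqrt (p a)))"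
        unfolding bregH_def by (rule sum_mono) (use pp xnn sqdiff_le in auto)
      also have "\<dots> = e^2 * C"
        by (simp add: x_def C_def sum_distrib_left power_mult_distrib)
      finally show ?thesis .
    qed
    hence "lam * bregH K x p \<le> lam * (e^2 * C)" using lam by (intro mult_left_mono) auto
    finally have "F x - F p \<le> lam * (e^2 * C) + e * d" by simp
    moreover have "F p \<le> F x" using opt xs by blast
    ultimately have "0 \<le> e * (e * (lam * C) + d)" by (simp add: power2_eq_square algebra_simps)
    hence "0 \<le> e * (lam * C) + d" using e by (simp add: zero_le_mult_iff)
    thus "- (e * (lam * C)) \<le> d" by simp
  qed
  moreover have "F q - F p - lam * bregH K q p = d"
    using ident[of q] q by (simp add: simplex_def d_def)
  ultimately show ?thesis by simp
qed



lemma coord_bound: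
  fixes p q l lam :: real
  assumes "p \<ge> 0" "q \<ge> 0" "l \<ge> 0" "lam > 0"
  shows "lam * ((p - q) * l) - lam * (lam * ((sqrt q - sqrt p)^2 / sqrt p)) \<le> p * sqrt p * l^2"
proof (cases "p = 0")
  case True thus ?thesis using assms by simp
next
  case False
  define s where "s = sqrt p"
  define x where "x = sqrt q"
  have s: "s > 0" "p = s^2" using assms False by (auto simp: s_def)
  have x: "x \<ge> 0" "q = x^2" using assms by (auto simp: x_def)
  have key: "lam * s * ((s^2 - x^2) * l) - lam^2 * (x - s)^2 \<le> s^4 * l^2"
  proof (cases "x \<ge> s")
    case True
    hence "s^2 - x^2 \<le> 0" using s x by (simp add: power_mono)
    hence "lam * s * ((s^2 - x^2) * l) \<le> 0" using s assms
      by (simp add: mult_nonneg_nonpos mult_nonpos_nonneg)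
    moreover have "0 \<le> s^4 * l^2" by simp
    moreover have "0 \<le> lam^2 * (x - s)^2" by simp
    ultimately show ?thesis by linarith
  next
    case False
    define u where "u = lam * (s - x)"
    have u: "u \<ge> 0" using False assms by (simp add: u_def)
    have "(s^2 - x^2) * l \<le> 2 * s * (s - x) * l"
    proof -
      have "s^2 - x^2 = (s - x) * (s + x)" by (simp add: power2_eq_square algebra_simps)
      also have "\<dots> \<le> (s - x) * (2 * s)" using False x by (intro mult_left_mono) auto
      finally show ?thesis using assms by (intro mult_right_mono) (auto simp: algebra_simps)
    qed
    hence "lam * s * ((s^2 - x^2) * l) \<le> lam * s * (2 * s * (s - x) * l)"
      using s assms by (intro mult_left_mono) auto
    also have "\<dots> = 2 * s^2 * l * u" by (simp add: u_def power2_eq_square algebra_simps)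
    finally have "lam * s * ((s^2 - x^2) * l) - lam^2 * (x - s)^2 \<le> 2 * s^2 * l * u - u^2"
      by (simp add: u_def power2_eq_square algebra_simps)
    also have "\<dots> \<le> s^4 * l^2"
    proof -
      have "0 \<le> (u - s^2 * l)^2" by simp
      thus ?thesis by (simp add: power2_eq_square algebra_simps power4_eq_xxxx)
    qed
    finally show ?thesis .
  qed
  have "lam * ((p - q) * l) - lam * (lam * ((sqrt q - sqrt p)^2 / sqrt p))
      = (lam * s * ((s^2 - x^2) * l) - lam^2 * (x - s)^2) / s"
    using s x unfolding s_def[symmetric] x_def[symmetric]
    by (simp add: field_simps power2_eq_square)
  also have "\<dots> \<le> s^4 * l^2 / s" using key s by (intro divide_right_mono) auto
  also have "\<dots> = p * sqrt p * l^2" using s unfolding s_def[symmetric]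
    by (simp add: power2_eq_square power4_eq_xxxx field_simps)
  finally show ?thesis .
qed

lemma shift_sum:
  fixes p q Yh :: "nat \<Rightarrow> real"
  assumes "p \<in> simplex K" "q \<in> simplex K"
  shows "(\<Sum>a<K. (p a - q a) * (- Yh a)) = (\<Sum>a<K. (p a - q a) * (M - Yh a))"
proof -
  have "(\<Sum>a<K. (p a - q a) * (M - Yh a)) = (\<Sum>a<K. (p a - q a) * M + (p a - q a) * (- Yh a))"
    by (simp add: algebra_simps)
  also have "\<dots> = (\<Sum>a<K. (p a - q a)) * M + (\<Sum>a<K. (p a - q a) * (- Yh a))"
    by (simp only: sum.distrib sum_distrib_right)
  finally have "(\<Sum>a<K. (p a - q a) * (M - Yh a)) = ((\<Sum>a<K. p a) - (\<Sum>a<K. q a)) * M + (\<Sum>a<K. (p a - q a) * (- Yh a))"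
    by (simp add: sum_subtractf)
  thus ?thesis using assms by (simp add: simplex_def)
qed

lemma delta_bounds:
  fixes p Yh :: "nat \<Rightarrow> real"
  assumes p: "p \<in> simplex K" and K: "K \<ge> 1" and lam: "lam \<ge> 0"
    and Y: "\<forall>a<K. Yh a \<le> M"
    and d: "d = (SUP q\<in>simplex K. (\<Sum>a<K. (p a - q a) * (- Yh a)) - lam * bregH K q p)"
  shows "0 \<le> d"
    and "d \<le> (\<Sum>a<K. p a * (M - Yh a))"
    and "\<And>q. q \<in> simplex K \<Longrightarrow> (\<Sum>a<K. (p a - q a) * (- Yh a)) - lam * bregH K q p \<le> d"
    and "lam > 0 \<Longrightarrow> lam * d \<le> (\<Sum>a<K. p a * sqrt (p a) * (M - Yh a)^2)"
proof -
  define V where "V = (\<lambda>q. (\<Sum>a<K. (p a - q a) * (- Yh a)) - lam * bregH K q p)"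
  have pnn: "\<forall>a<K. 0 \<le> p a" using p by (simp add: simplex_def)
  have Vle: "V q \<le> (\<Sum>a<K. p a * (M - Yh a))" if q: "q \<in> simplex K" for q
  proof -
    have "V q = (\<Sum>a<K. (p a - q a) * (M - Yh a)) - lam * bregH K q p"
      unfolding V_def using shift_sum[OF p q] by simp
    also have "\<dots> \<le> (\<Sum>a<K. (p a - q a) * (M - Yh a))"
      using breg_nonneg[OF pnn] lam by simp
    also have "\<dots> = (\<Sum>a<K. p a * (M - Yh a)) - (\<Sum>a<K. q a * (M - Yh a))"
      by (simp only: left_diff_distrib sum_subtractf)
    finally have "V q \<le> (\<Sum>a<K. p a * (M - Yh a)) - (\<Sum>a<K. q a * (M - Yh a))" .
    moreover have "(\<Sum>a<K. q a * (M - Yh a)) \<ge> 0"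
      using q Y by (intro sum_nonneg) (auto simp: simplex_def)
    ultimately show ?thesis by simp
  qed
  have ne: "simplex K \<noteq> {}" using vertex_simplex[of 0 K] K by auto
  have bdd: "bdd_above (V ` simplex K)" using Vle by (intro bdd_aboveI2) auto
  have dV: "d = (SUP q\<in>simplex K. V q)" unfolding d V_def ..
  have Vp: "V p = 0" unfolding V_def by (simp add: breg_self)
  show "0 \<le> d" unfolding dV using cSUP_upper[OF p bdd] Vp by simp
  show "d \<le> (\<Sum>a<K. p a * (M - Yh a))" unfolding dV using Vle by (intro cSUP_least ne) auto
  show "\<And>q. q \<in> simplex K \<Longrightarrow> (\<Sum>a<K. (p a - q a) * (- Yh a)) - lam * bregH K q p \<le> d"
    unfolding dV using cSUP_upper[OF _ bdd] by (simp add: V_def)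
  assume lpos: "lam > 0"
  have "lam * V q \<le> (\<Sum>a<K. p a * sqrt (p a) * (M - Yh a)^2)" if q: "q \<in> simplex K" for q
  proof -
    have "V q = (\<Sum>a<K. (p a - q a) * (M - Yh a)) - lam * bregH K q p"
      unfolding V_def using shift_sum[OF p q] by simp
    hence "lam * V q = lam * (\<Sum>a<K. (p a - q a) * (M - Yh a)) - lam * (lam * bregH K q p)"
      by (simp add: right_diff_distrib)
    also have "\<dots> = (\<Sum>a<K. lam * ((p a - q a) * (M - Yh a)) - lam * (lam * ((sqrt (q a) - sqrt (p a))^2 / sqrt (p a))))"
      by (simp only: bregH_def sum_distrib_left sum_subtractf)
    also have "\<dots> \<le> (\<Sum>a<K. p a * sqrt (p a) * (M - Yh a)^2)"
      by (rule sum_mono) (use p q Y lpos coord_bound in \<open>auto simp: simplex_def\<close>)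
    finally show ?thesis .
  qed
  hence "V q \<le> (\<Sum>a<K. p a * sqrt (p a) * (M - Yh a)^2) / lam" if "q \<in> simplex K" for q
    using that lpos by (simp add: field_simps)
  hence "d \<le> (\<Sum>a<K. p a * sqrt (p a) * (M - Yh a)^2) / lam"
    unfolding dV by (intro cSUP_least ne) auto
  thus "lam * d \<le> (\<Sum>a<K. p a * sqrt (p a) * (M - Yh a)^2)" using lpos by (simp add: field_simps)
qed



lemma self_bound:
  fixes d B :: "nat \<Rightarrow> real"
  assumes d: "\<forall>s<T. 0 \<le> d s \<and> d s \<le> c" and dB: "\<forall>s<T. (\<Sum>r<s. d r) * d s \<le> B s"
    and B: "\<forall>s<T. 0 \<le> B s" and c: "c \<ge> 0"
  shows "(\<Sum>s<T. d s) \<le> c + sqrt (2 * (\<Sum>s<T. B s))"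
proof -
  have ind: "(\<Sum>r<n. d r)^2 \<le> 2 * (\<Sum>r<n. B r) + c * (\<Sum>r<n. d r)" if "n \<le> T" for n
    using that
  proof (induction n)
    case 0 thus ?case by simp
  next
    case (Suc n)
    hence IH: "(\<Sum>r<n. d r)^2 \<le> 2 * (\<Sum>r<n. B r) + c * (\<Sum>r<n. d r)" by simp
    have n: "n < T" using Suc by simp
    have "d n * d n \<le> c * d n" using d n by (intro mult_right_mono) auto
    moreover have "(\<Sum>r<n. d r) * d n \<le> B n" using dB n by simp
    ultimately show ?case using IH by (simp add: power2_eq_square algebra_simps)
  qed
  define L where "L = (\<Sum>s<T. d s)"
  define A where "A = 2 * (\<Sum>s<T. B s)"
  have L0: "L \<ge> 0" unfolding L_def using d by (intro sum_nonneg) auto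
  have A0: "A \<ge> 0" unfolding A_def using B by (intro mult_nonneg_nonneg sum_nonneg) auto
  have LA: "L^2 \<le> A + c * L" using ind[of T] by (simp add: L_def A_def)
  show ?thesis unfolding L_def[symmetric] A_def[symmetric]
  proof (rule ccontr)
    assume "\<not> L \<le> c + sqrt A"
    hence h: "L - c > sqrt A" by simp
    have sA: "sqrt A \<ge> 0" "sqrt A * sqrt A = A" using A0 by auto
    have "L > sqrt A" using h c by simp
    have Lp: "L > 0" using sA(1) \<open>L > sqrt A\<close> by linarith
    have "L * (L - c) > L * sqrt A" using h Lp
      by (intro mult_strict_left_mono) auto
    moreover have "L * sqrt A \<ge> sqrt A * sqrt A" using \<open>L > sqrt A\<close> sA by (intro mult_right_mono) auto
    ultimately have "L * (L - c) > A" using sA by simp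
    thus False using LA by (simp add: power2_eq_square algebra_simps)
  qed
qed

lemma sqrt_le_sigma:
  fixes A s :: real
  assumes "A \<ge> 0" "s > 0"
  shows "sqrt A \<le> (A + s^2) / (2 * s)"
proof -
  have "sqrt A \<le> (A * (1 / s) + 1 / (1 / s)) / 2" using sqrt_le_amgm[of A "1/s"] assms by simp
  thus ?thesis using assms by (simp add: field_simps power2_eq_square)
qed

definition wt :: "(nat list \<Rightarrow> nat \<Rightarrow> real) \<Rightarrow> nat list \<Rightarrow> real" where
  "wt P h = (\<Prod>s<length h. P (take s h) (h ! s))"

definition EE :: "(nat list \<Rightarrow> nat \<Rightarrow> real) \<Rightarrow> nat \<Rightarrow> nat \<Rightarrow> (nat list \<Rightarrow> real) \<Rightarrow> real" where
  "EE P K n f = (\<Sum>h\<in>histories K n. wt P h * f h)"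

lemma hist_finite: "finite (histories K n)"
proof -
  have "histories K n = {xs. set xs \<subseteq> {..<K} \<and> length xs = n}" by (auto simp: histories_def)
  thus ?thesis using finite_lists_length_eq[of "{..<K}" n] by simp
qed

lemma hist_Suc: "histories K (Suc n) = (\<lambda>(h, a). h @ [a]) ` (histories K n \<times> {..<K})"
proof
  show "(\<lambda>(h, a). h @ [a]) ` (histories K n \<times> {..<K}) \<subseteq> histories K (Suc n)"
    by (auto simp: histories_def)
next
  show "histories K (Suc n) \<subseteq> (\<lambda>(h, a). h @ [a]) ` (histories K n \<times> {..<K})"
  proof
    fix h' assume h': "h' \<in> histories K (Suc n)"
    hence ne: "h' \<noteq> []" by (auto simp: histories_def)
    hence eq: "h' = butlast h' @ [last h']" by simp
    have "butlast h' \<in> histories K n" using h' by (auto simp: histories_def dest: in_set_butlastD)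
    moreover have "last h' < K"
    proof -
      have "last h' \<in> set h'" using ne by simp
      thus "last h' < K" using h' by (auto simp: histories_def)
    qed
    ultimately show "h' \<in> (\<lambda>(h, a). h @ [a]) ` (histories K n \<times> {..<K})"
      using eq by (intro image_eqI[of _ _ "(butlast h', last h')"]) auto
  qed
qed

lemma hist_Suc_sum:
  fixes f :: "nat list \<Rightarrow> real"
  shows "(\<Sum>h\<in>histories K (Suc n). f h) = (\<Sum>h\<in>histories K n. \<Sum>a<K. f (h @ [a]))"
proof -
  have inj: "inj_on (\<lambda>(h, a). h @ [a]) (histories K n \<times> {..<K})"
    by (auto simp: inj_on_def)
  have "(\<Sum>h\<in>histories K (Suc n). f h) = (\<Sum>x\<in>histories K n \<times> {..<K}. f ((\<lambda>(h, a). h @ [a]) x))"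
    unfolding hist_Suc by (rule sum.reindex[OF inj, unfolded comp_def])
  also have "\<dots> = (\<Sum>(h, a)\<in>histories K n \<times> {..<K}. f (h @ [a]))"
    by (simp add: case_prod_beta')
  also have "\<dots> = (\<Sum>h\<in>histories K n. \<Sum>a<K. f (h @ [a]))"
    by (rule sum.cartesian_product[symmetric])
  finally show ?thesis .
qed

lemma wt_snoc: "wt P (h @ [a]) = wt P h * P h a"
proof -
  have "wt P (h @ [a]) = (\<Prod>s<Suc (length h). P (take s (h @ [a])) ((h @ [a]) ! s))"
    by (simp add: wt_def)
  also have "\<dots> = (\<Prod>s<length h. P (take s (h @ [a])) ((h @ [a]) ! s)) * P h a"
    by (simp add: prod.lessThan_Suc)
  also have "(\<Prod>s<length h. P (take s (h @ [a])) ((h @ [a]) ! s)) = wt P h"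
    unfolding wt_def by (rule prod.cong) (auto simp: nth_append)
  finally show ?thesis .
qed

lemma EE_Suc: "EE P K (Suc n) f = EE P K n (\<lambda>h. \<Sum>a<K. P h a * f (h @ [a]))"
  unfolding EE_def hist_Suc_sum wt_snoc
  by (simp add: sum_distrib_left mult.assoc)

lemma EE_add: "EE P K n (\<lambda>h. f h + g h) = EE P K n f + EE P K n g"
  by (simp add: EE_def algebra_simps sum.distrib)

lemma EE_diff: "EE P K n (\<lambda>h. f h - g h) = EE P K n f - EE P K n g"
  by (simp add: EE_def algebra_simps sum_subtractf)

lemma EE_cmult: "EE P K n (\<lambda>h. c * f h) = c * EE P K n f"
  by (simp add: EE_def algebra_simps sum_distrib_left)

lemma EE_sum: "EE P K n (\<lambda>h. \<Sum>s\<in>S. f s h) = (\<Sum>s\<in>S. EE P K n (f s))"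
  unfolding EE_def by (simp add: sum_distrib_left sum.swap[of _ S])

lemma EE_cong: "(\<And>h. h \<in> histories K n \<Longrightarrow> f h = g h) \<Longrightarrow> EE P K n f = EE P K n g"
  unfolding EE_def by (intro sum.cong) auto

context
  fixes P :: "nat list \<Rightarrow> nat \<Rightarrow> real" and K :: nat
  assumes Ps: "\<And>h. set h \<subseteq> {..<K} \<Longrightarrow> P h \<in> simplex K"
begin

lemma wt_nonneg: "set h \<subseteq> {..<K} \<Longrightarrow> wt P h \<ge> 0"
  unfolding wt_def
proof (intro prod_nonneg ballI)
  fix s assume h: "set h \<subseteq> {..<K}" and s: "s \<in> {..<length h}"
  have "set (take s h) \<subseteq> {..<K}" using h by (meson order_trans set_take_subset)
  moreover have "h ! s < K" using h s by (auto dest: nth_mem)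
  ultimately show "0 \<le> P (take s h) (h ! s)" using Ps simplex_nonneg by blast
qed

lemma EE_mono: "(\<And>h. h \<in> histories K n \<Longrightarrow> f h \<le> g h) \<Longrightarrow> EE P K n f \<le> EE P K n g"
  unfolding EE_def by (intro sum_mono mult_left_mono) (auto simp: histories_def wt_nonneg)

lemma EE_one: "EE P K n (\<lambda>_. 1) = 1"
proof (induction n)
  case 0
  have "histories K 0 = {[]}" by (auto simp: histories_def)
  thus ?case by (simp add: EE_def wt_def)
next
  case (Suc n)
  have "EE P K (Suc n) (\<lambda>_. 1) = EE P K n (\<lambda>h. \<Sum>a<K. P h a)" by (simp add: EE_Suc)
  also have "\<dots> = EE P K n (\<lambda>_. 1)"
    by (rule EE_cong) (use Ps simplex_sum in \<open>auto simp: histories_def\<close>)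
  finally show ?case using Suc by simp
qed

lemma EE_const: "EE P K n (\<lambda>_. c) = c"
  using EE_cmult[of P K n c "\<lambda>_. 1"] EE_one by simp

lemma EE_take: "k \<le> n \<Longrightarrow> EE P K n (\<lambda>h. f (take k h)) = EE P K k f"
proof (induction n rule: dec_induct)
  case base
  show ?case by (rule EE_cong) (auto simp: histories_def)
next
  case (step n)
  have "EE P K (Suc n) (\<lambda>h. f (take k h)) = EE P K n (\<lambda>h. \<Sum>a<K. P h a * f (take k (h @ [a])))"
    by (simp add: EE_Suc)
  also have "\<dots> = EE P K n (\<lambda>h. f (take k h))"
  proof (rule EE_cong)
    fix h assume h: "h \<in> histories K n"
    hence "take k (h @ [a]) = take k h" for a using step by (simp add: histories_def)
    hence "(\<Sum>a<K. P h a * f (take k (h @ [a]))) = (\<Sum>a<K. P h a) * f (take k h)"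
      by (simp add: sum_distrib_right)
    also have "\<dots> = f (take k h)" using Ps[of h] h simplex_sum by (auto simp: histories_def)
    finally show "(\<Sum>a<K. P h a * f (take k (h @ [a]))) = f (take k h)" .
  qed
  finally show ?case using step by simp
qed

end



lemma sum_shift1: "(\<Sum>r=1..n. g r) = (\<Sum>r<n. g (Suc r) :: real)"
  using sum.atLeast1_atMost_eq[of g n] by simp

lemma yhat_take: "1 \<le> s \<Longrightarrow> s \<le> k \<Longrightarrow> yhat P M y (take k h) s a = yhat P M y h s a"
proof -
  assume "1 \<le> s" "s \<le> k"
  hence "take k h ! (s - 1) = h ! (s - 1)" "take (s - 1) (take k h) = take (s - 1) h"
    by (auto simp: min_def)
  thus ?thesis unfolding yhat_def by simp
qed

lemma invlr_take: "n \<le> k \<Longrightarrow> invlr P K M y (take k h) n = invlr P K M y h n"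
  by (induction n) (simp_all add: min_def)

lemma deltaL_take:
  assumes "Suc s \<le> length h"
  shows "deltaL P K M y lam (take (Suc s) h) =
    (SUP q\<in>simplex K. (\<Sum>a<K. (P (take s h) a - q a) * (- yhat P M y h (Suc s) a)) - lam * bregH K q (P (take s h)))"
proof -
  have "butlast (take (Suc s) h) = take s h" using assms by (simp add: butlast_take)
  moreover have "length (take (Suc s) h) = Suc s" using assms by simp
  moreover have "yhat P M y (take (Suc s) h) (Suc s) a = yhat P M y h (Suc s) a" for a
    by (rule yhat_take) auto
  ultimately show ?thesis unfolding deltaL_def by simp
qed

lemma ftrl_take:
  assumes "s \<le> length h"
  shows "ftrl_obj P K M y (take s h) q =
    - (\<Sum>a<K. q a * (\<Sum>r<s. yhat P M y h (Suc r) a)) - invlr P K M y h s * (\<Sum>a<K. 2 * sqrt (q a))"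
proof -
  have "(\<Sum>r=1..s. yhat P M y (take s h) r a) = (\<Sum>r<s. yhat P M y h (Suc r) a)" for a
    unfolding sum_shift1 by (rule sum.cong) (auto intro: yhat_take)
  moreover have "length (take s h) = s" using assms by simp
  ultimately show ?thesis unfolding ftrl_obj_def using invlr_take[of s s P K M y h] by simp
qed

lemma yhat_snoc:
  "length h = s \<Longrightarrow> yhat P M y (h @ [a]) (Suc s) u = (if u = a then (y (Suc s) u - M) / P h u else 0) + M"
  unfolding yhat_def by (simp add: nth_append)



definition Dk :: "nat \<Rightarrow> real" where "Dk K = 2 * (sqrt (real K) - 1)"

definition bt :: "(nat list \<Rightarrow> nat \<Rightarrow> real) \<Rightarrow> nat \<Rightarrow> real \<Rightarrow> (nat \<Rightarrow> nat \<Rightarrow> real) \<Rightarrow> nat \<Rightarrow> nat list \<Rightarrow> real" where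
  "bt P K M y s h = (\<Sum>a<K. P (take s h) a * sqrt (P (take s h) a) * (M - yhat P M y h (Suc s) a)^2)"

lemma invlr_Suc': "invlr P K M y h (Suc n) = invlr P K M y h n + deltaL P K M y (invlr P K M y h n) (take (Suc n) h) / Dk K"
  by (simp add: Dk_def)

context
  fixes P :: "nat list \<Rightarrow> nat \<Rightarrow> real" and K :: nat and M m :: real and y :: "nat \<Rightarrow> nat \<Rightarrow> real"
  assumes K2: "K \<ge> 2" and mM: "m \<le> M"
    and ybd: "\<And>t a. t \<ge> 1 \<Longrightarrow> a < K \<Longrightarrow> m \<le> y t a \<and> y t a \<le> M"
    and ada: "adaftrl P K M y"
begin

lemma Dk_pos: "Dk K > 0"
proof -
  have "sqrt 1 < sqrt (real K)" using K2 by (intro real_sqrt_less_mono) auto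
  thus ?thesis by (simp add: Dk_def)
qed

lemma Ps: "set h \<subseteq> {..<K} \<Longrightarrow> P h \<in> simplex K"
proof (cases "h = []")
  case True
  have P0: "\<forall>a<K. P [] a = 1 / real K" using ada by (simp add: adaftrl_def)
  have "(\<Sum>a<K. P [] a) = (\<Sum>a<K. 1 / real K)" using P0 by simp
  also have "\<dots> = 1" using K2 by simp
  finally show ?thesis using True P0 by (simp add: simplex_def)
next
  case False
  assume "set h \<subseteq> {..<K}"
  moreover have "length h \<ge> 1" using False by (cases h) auto
  ultimately show ?thesis using ada by (simp add: adaftrl_def)
qed

lemma Ps_take: "set h \<subseteq> {..<K} \<Longrightarrow> P (take n h) \<in> simplex K"
  by (rule Ps) (meson order_trans set_take_subset)

lemma yhat_le:
  assumes h: "set h \<subseteq> {..<K}" and s: "s < length h" and a: "a < K"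
  shows "yhat P M y h (Suc s) a \<le> M"
proof -
  have "P (take s h) a \<ge> 0" using Ps_take[OF h] a simplex_nonneg by blast
  moreover have "y (Suc s) a - M \<le> 0" using ybd[of "Suc s" a] a by simp
  ultimately have "(y (Suc s) a - M) / P (take s h) a \<le> 0" by (simp add: divide_nonpos_nonneg)
  thus ?thesis unfolding yhat_def by (cases "a = h ! s") auto
qed

lemma pl_le:
  assumes h: "set h \<subseteq> {..<K}" and s: "s < length h"
  shows "(\<Sum>a<K. P (take s h) a * (M - yhat P M y h (Suc s) a)) \<le> M - m"
proof -
  define A where "A = h ! s"
  define p where "p = P (take s h)"
  have A: "A < K" using h s by (auto simp: A_def dest: nth_mem)
  have "(\<Sum>a<K. p a * (M - yhat P M y h (Suc s) a)) = (\<Sum>a<K. if a = A then p A * ((M - y (Suc s) A) / p A) else 0)"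
    by (rule sum.cong) (auto simp: yhat_def A_def p_def diff_divide_distrib algebra_simps)
  also have "\<dots> = p A * ((M - y (Suc s) A) / p A)" using A by simp
  also have "\<dots> \<le> M - m"
  proof (cases "p A = 0")
    case True thus ?thesis using mM by simp
  next
    case False thus ?thesis using ybd[of "Suc s" A] A by simp
  qed
  finally show ?thesis by (simp add: p_def)
qed

lemma bt_nonneg: "set h \<subseteq> {..<K} \<Longrightarrow> 0 \<le> bt P K M y s h"
  unfolding bt_def
proof (intro sum_nonneg)
  fix a assume h: "set h \<subseteq> {..<K}" and a: "a \<in> {..<K}"
  have "0 \<le> P (take s h) a" using Ps_take[OF h] a simplex_nonneg by blast
  thus "0 \<le> P (take s h) a * sqrt (P (take s h) a) * (M - yhat P M y h (Suc s) a)^2" by simp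
qed

lemma delta_facts:
  assumes h: "set h \<subseteq> {..<K}" and s: "s < length h" and lam: "lam \<ge> 0"
  shows "0 \<le> deltaL P K M y lam (take (Suc s) h)"
    and "deltaL P K M y lam (take (Suc s) h) \<le> M - m"
    and "\<And>q. q \<in> simplex K \<Longrightarrow> (\<Sum>a<K. (P (take s h) a - q a) * (- yhat P M y h (Suc s) a)) - lam * bregH K q (P (take s h)) \<le> deltaL P K M y lam (take (Suc s) h)"
    and "lam > 0 \<Longrightarrow> lam * deltaL P K M y lam (take (Suc s) h) \<le> bt P K M y s h"
proof -
  note dl = deltaL_take[of s h P K M y lam]
  have K1: "K \<ge> 1" using K2 by simp
  have Y: "\<forall>a<K. yhat P M y h (Suc s) a \<le> M" using yhat_le[OF h s] by blast
  note db = delta_bounds[OF Ps_take[OF h] K1 lam Y dl[OF Suc_leI[OF s]]]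
  show "0 \<le> deltaL P K M y lam (take (Suc s) h)" by (rule db(1))
  show "deltaL P K M y lam (take (Suc s) h) \<le> M - m" using db(2) pl_le[OF h s] by linarith
  show "\<And>q. q \<in> simplex K \<Longrightarrow> (\<Sum>a<K. (P (take s h) a - q a) * (- yhat P M y h (Suc s) a)) - lam * bregH K q (P (take s h)) \<le> deltaL P K M y lam (take (Suc s) h)"
    by (rule db(3))
  show "lam > 0 \<Longrightarrow> lam * deltaL P K M y lam (take (Suc s) h) \<le> bt P K M y s h"
    using db(4) by (simp add: bt_def)
qed

lemma invlr_nonneg: "set h \<subseteq> {..<K} \<Longrightarrow> n \<le> length h \<Longrightarrow> 0 \<le> invlr P K M y h n"
proof (induction n)
  case 0 thus ?case by simp
next
  case (Suc n)
  hence "0 \<le> invlr P K M y h n" by simp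
  hence "0 \<le> deltaL P K M y (invlr P K M y h n) (take (Suc n) h)"
    using delta_facts(1)[of h n] Suc by simp
  moreover have "0 \<le> deltaL P K M y (invlr P K M y h n) (take (Suc n) h) / Dk K"
    using calculation Dk_pos by simp
  ultimately show ?case using \<open>0 \<le> invlr P K M y h n\<close> by (simp add: invlr_Suc' del: invlr.simps(2))
qed

lemma invlr_Dk: "Dk K * invlr P K M y h (Suc n) = Dk K * invlr P K M y h n + deltaL P K M y (invlr P K M y h n) (take (Suc n) h)"
  using Dk_pos by (simp add: invlr_Suc' field_simps del: invlr.simps(2))

lemma invlr_sum: "Dk K * invlr P K M y h n = (\<Sum>s<n. deltaL P K M y (invlr P K M y h s) (take (Suc s) h))"
  by (induction n) (simp_all add: invlr_Dk del: invlr.simps(2))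

lemma path_regret:
  assumes h: "h \<in> histories K T" and T: "T \<ge> 1" and u: "u < K"
  shows "(\<Sum>s<T. yhat P M y h (Suc s) u) - (\<Sum>s<T. \<Sum>a<K. P (take s h) a * yhat P M y h (Suc s) a)
          \<le> 2 * (Dk K * invlr P K M y h T)"
proof -
  have hs: "set h \<subseteq> {..<K}" and lh: "length h = T" using h by (auto simp: histories_def)
  define Yc where "Yc n a = (\<Sum>r<n. yhat P M y h (Suc r) a)" for n a
  define lam where "lam n = invlr P K M y h n" for n
  define obj where "obj n q = - (\<Sum>a<K. q a * Yc n a) - lam n * (\<Sum>a<K. 2 * sqrt (q a))" for n q
  define p where "p n = P (take n h)" for n
  define Yh where "Yh n a = yhat P M y h (Suc n) a" for n a
  define dl where "dl n = deltaL P K M y (lam n) (take (Suc n) h)" for n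
  have Dk: "Dk K > 0" by (rule Dk_pos)
  have ps: "p n \<in> simplex K" for n unfolding p_def using Ps_take[OF hs] .
  have lam0: "n \<le> T \<Longrightarrow> lam n \<ge> 0" for n unfolding lam_def using invlr_nonneg[OF hs] lh by simp
  have opt: "\<forall>q\<in>simplex K. obj n (p n) \<le> obj n q" if n: "n \<le> T" for n
  proof (cases "n = 0")
    case True thus ?thesis by (simp add: obj_def Yc_def lam_def)
  next
    case False
    have "set (take n h) \<subseteq> {..<K}" using hs by (meson order_trans set_take_subset)
    moreover have "length (take n h) \<ge> 1" using False n lh by simp
    ultimately have "\<forall>q\<in>simplex K. ftrl_obj P K M y (take n h) (P (take n h)) \<le> ftrl_obj P K M y (take n h) q"
      using ada by (simp add: adaftrl_def)
    thus ?thesis using ftrl_take[of n h] n lh by (simp add: obj_def Yc_def lam_def p_def)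
  qed
  have br: "obj n (p n) + lam n * bregH K q (p n) \<le> obj n q" if n: "n \<le> T" and q: "q \<in> simplex K" for n q
    by (rule ftrl_breg[OF ps lam0[OF n] opt[OF n] _ q, where Y="Yc n"]) (simp add: obj_def fun_eq_iff)
  have Gb: "(\<Sum>a<K. 2 * sqrt (q a)) \<le> 2 * sqrt K" if q: "q \<in> simplex K" for q
    using sqrt_sum_le[OF q] K2 by (simp add: sum_distrib_left[symmetric])
  have lamS: "Dk K * lam (Suc n) = Dk K * lam n + dl n" for n
    unfolding lam_def dl_def by (rule invlr_Dk)
  have step: "obj (Suc n) (p (Suc n)) + lam (Suc n) * (2 * sqrt K)
      \<ge> obj n (p n) + lam n * (2 * sqrt K) - (\<Sum>a<K. p n a * Yh n a) - dl n" if n: "n < T" for n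
  proof -
    define q where "q = p (Suc n)"
    have q: "q \<in> simplex K" unfolding q_def by (rule ps)
    have d0: "dl n \<ge> 0" unfolding dl_def using delta_facts(1)[OF hs, of n "lam n"] n lh lam0[of n] by simp
    have lmono: "lam (Suc n) \<ge> lam n" using lamS[of n] d0 Dk mult_le_cancel_left_pos[of "Dk K" "lam n" "lam (Suc n)"]
      by linarith
    have Ycs: "(\<Sum>a<K. q a * Yc (Suc n) a) = (\<Sum>a<K. q a * Yc n a) + (\<Sum>a<K. q a * Yh n a)"
      by (simp add: Yc_def Yh_def algebra_simps sum.distrib)
    have "(lam (Suc n) - lam n) * (2 * sqrt K - (\<Sum>a<K. 2 * sqrt (q a))) \<ge> 0"
      using lmono Gb[OF q] by simp
    hence mono: "obj (Suc n) q + lam (Suc n) * (2 * sqrt K) \<ge> obj n q + lam n * (2 * sqrt K) - (\<Sum>a<K. q a * Yh n a)"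
      unfolding obj_def Ycs by (simp add: algebra_simps)
    have b: "obj n q \<ge> obj n (p n) + lam n * bregH K q (p n)" using br[OF _ q] n by simp
    have dd: "(\<Sum>a<K. (p n a - q a) * (- Yh n a)) - lam n * bregH K q (p n) \<le> dl n"
      unfolding dl_def p_def Yh_def using delta_facts(3)[OF hs, of n "lam n" q] n lh lam0[of n] q
      by (simp add: p_def)
    have lin: "(\<Sum>a<K. (p n a - q a) * (- Yh n a)) = (\<Sum>a<K. q a * Yh n a) - (\<Sum>a<K. p n a * Yh n a)"
      by (simp add: algebra_simps sum_subtractf)
    show ?thesis using mono b dd lin unfolding q_def by linarith
  qed
  have claim: "obj n (p n) + lam n * (2 * sqrt K) \<ge> - (\<Sum>r<n. \<Sum>a<K. p r a * Yh r a) - Dk K * lam n"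
    if "n \<le> T" for n
    using that
  proof (induction n)
    case 0 thus ?case by (simp add: obj_def Yc_def lam_def)
  next
    case (Suc n)
    hence IH: "obj n (p n) + lam n * (2 * sqrt K) \<ge> - (\<Sum>r<n. \<Sum>a<K. p r a * Yh r a) - Dk K * lam n" by simp
    show ?case using step[of n] Suc.prems IH lamS[of n] by simp
  qed
  define e where "e = (\<lambda>a. if a = u then 1 else (0::real))"
  have es: "e \<in> simplex K" unfolding e_def using vertex_simplex[OF u] .
  have "obj T (p T) \<le> obj T e" using opt[of T] es by simp
  moreover have "obj T e = - Yc T u - lam T * 2"
  proof -
    have "(\<Sum>a<K. e a * Yc T a) = (\<Sum>a<K. if a = u then Yc T u else 0)"
      by (rule sum.cong) (auto simp: e_def)
    hence "(\<Sum>a<K. e a * Yc T a) = Yc T u" using u by simp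
    moreover have "(\<Sum>a<K. 2 * sqrt (e a)) = (\<Sum>a<K. if a = u then 2 else 0)"
      by (rule sum.cong) (auto simp: e_def)
    hence "(\<Sum>a<K. 2 * sqrt (e a)) = 2" using u by simp
    ultimately show ?thesis by (simp add: obj_def)
  qed
  moreover have "Dk K * lam T = 2 * sqrt K * lam T - 2 * lam T" by (simp add: Dk_def algebra_simps)
  ultimately have "Yc T u - (\<Sum>r<T. \<Sum>a<K. p r a * Yh r a) \<le> 2 * (Dk K * lam T)"
    using claim[of T] by (simp add: algebra_simps)
  thus ?thesis by (simp add: Yc_def p_def Yh_def lam_def)
qed


lemma path_Lambda:
  assumes h: "h \<in> histories K T"
  shows "Dk K * invlr P K M y h T \<le> (M - m) + sqrt (2 * (\<Sum>s<T. Dk K * bt P K M y s h))"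
proof -
  have hs: "set h \<subseteq> {..<K}" and lh: "length h = T" using h by (auto simp: histories_def)
  define d where "d s = deltaL P K M y (invlr P K M y h s) (take (Suc s) h)" for s
  have l0: "s < T \<Longrightarrow> 0 \<le> invlr P K M y h s" for s using invlr_nonneg[OF hs, of s] lh by simp
  have "(\<Sum>s<T. d s) \<le> (M - m) + sqrt (2 * (\<Sum>s<T. Dk K * bt P K M y s h))"
  proof (rule self_bound)
    show "\<forall>s<T. 0 \<le> d s \<and> d s \<le> M - m"
      unfolding d_def using delta_facts(1,2)[OF hs] l0 lh by auto
    show "\<forall>s<T. 0 \<le> Dk K * bt P K M y s h"
      using bt_nonneg[OF hs] Dk_pos by simp
    show "0 \<le> M - m" using mM by simp
    show "\<forall>s<T. (\<Sum>r<s. d r) * d s \<le> Dk K * bt P K M y s h"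
    proof (intro allI impI)
      fix s assume s: "s < T"
      have eq: "(\<Sum>r<s. d r) = Dk K * invlr P K M y h s" unfolding d_def by (rule invlr_sum[symmetric])
      show "(\<Sum>r<s. d r) * d s \<le> Dk K * bt P K M y s h"
      proof (cases "invlr P K M y h s > 0")
        case True
        hence "invlr P K M y h s * d s \<le> bt P K M y s h"
          unfolding d_def using delta_facts(4)[OF hs, of s "invlr P K M y h s"] s lh by simp
        hence "Dk K * (invlr P K M y h s * d s) \<le> Dk K * bt P K M y s h"
          using Dk_pos by (intro mult_left_mono) auto
        thus ?thesis unfolding eq by (simp add: mult.assoc)
      next
        case False
        hence "invlr P K M y h s = 0" using l0[OF s] by simp
        thus ?thesis unfolding eq using bt_nonneg[OF hs] Dk_pos by simp
      qed
    qed
  qed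
  moreover have "(\<Sum>s<T. d s) = Dk K * invlr P K M y h T" unfolding d_def by (rule invlr_sum[symmetric])
  ultimately show ?thesis by simp
qed

lemma EE_yhat:
  assumes s: "s < T" and u: "u < K"
  shows "y (Suc s) u \<le> EE P K T (\<lambda>h. yhat P M y h (Suc s) u)"
proof -
  have "EE P K T (\<lambda>h. yhat P M y h (Suc s) u) = EE P K T (\<lambda>h. (\<lambda>h'. yhat P M y h' (Suc s) u) (take (Suc s) h))"
    by (rule EE_cong) (simp add: yhat_take)
  also have "\<dots> = EE P K (Suc s) (\<lambda>h'. yhat P M y h' (Suc s) u)"
    by (rule EE_take[where P=P and K=K, OF Ps]) (use s in auto)
  also have "\<dots> = EE P K s (\<lambda>h. \<Sum>a<K. P h a * yhat P M y (h @ [a]) (Suc s) u)"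
    by (rule EE_Suc)
  also have "\<dots> \<ge> EE P K s (\<lambda>_. y (Suc s) u)"
  proof (rule EE_mono[where P=P and K=K, OF Ps])
    fix h assume h: "h \<in> histories K s"
    hence hs: "set h \<subseteq> {..<K}" and lh: "length h = s" by (auto simp: histories_def)
    have "(\<Sum>a<K. P h a * yhat P M y (h @ [a]) (Suc s) u)
        = (\<Sum>a<K. (if a = u then P h u * ((y (Suc s) u - M) / P h u) else 0) + P h a * M)"
      by (rule sum.cong) (auto simp: yhat_snoc[OF lh] algebra_simps)
    also have "\<dots> = P h u * ((y (Suc s) u - M) / P h u) + M"
      using u simplex_sum[OF Ps[OF hs]] by (simp add: sum.distrib sum_distrib_right[symmetric])
    also have "\<dots> \<ge> y (Suc s) u"
      using ybd[of "Suc s" u] u by (cases "P h u = 0") auto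
    finally show "y (Suc s) u \<le> (\<Sum>a<K. P h a * yhat P M y (h @ [a]) (Suc s) u)" .
  qed
  finally show ?thesis using EE_const[where P=P and K=K, OF Ps] by simp
qed

lemma EE_played:
  "EE P K T (\<lambda>h. \<Sum>s<T. y (Suc s) (h ! s)) = EE P K T (\<lambda>h. \<Sum>s<T. \<Sum>a<K. P (take s h) a * yhat P M y h (Suc s) a)"
  unfolding EE_def
proof (rule sum.cong[OF refl])
  fix h assume h: "h \<in> histories K T"
  hence hs: "set h \<subseteq> {..<K}" and lh: "length h = T" by (auto simp: histories_def)
  show "wt P h * (\<Sum>s<T. y (Suc s) (h ! s)) = wt P h * (\<Sum>s<T. \<Sum>a<K. P (take s h) a * yhat P M y h (Suc s) a)"
  proof (cases "wt P h = 0")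
    case True thus ?thesis by simp
  next
    case False
    hence nz: "\<forall>s<T. P (take s h) (h ! s) \<noteq> 0" unfolding wt_def lh by auto
    have "(\<Sum>a<K. P (take s h) a * yhat P M y h (Suc s) a) = y (Suc s) (h ! s)" if s: "s < T" for s
    proof -
      define A where "A = h ! s"
      define p where "p = P (take s h)"
      have A: "A < K" using hs s lh by (auto simp: A_def dest: nth_mem)
      have pA: "p A \<noteq> 0" using nz s by (simp add: p_def A_def)
      have "(\<Sum>a<K. p a * yhat P M y h (Suc s) a) = (\<Sum>a<K. (if a = A then p A * ((y (Suc s) A - M) / p A) else 0) + p a * M)"
        by (rule sum.cong) (auto simp: yhat_def A_def p_def algebra_simps)
      also have "\<dots> = p A * ((y (Suc s) A - M) / p A) + M"
        using A simplex_sum[OF Ps_take[OF hs, of s]] by (simp add: sum.distrib sum_distrib_right[symmetric] p_def)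
      also have "\<dots> = y (Suc s) A" using pA by simp
      finally show ?thesis by (simp add: p_def A_def)
    qed
    thus ?thesis by simp
  qed
qed

lemma EE_bt:
  assumes s: "s < T"
  shows "EE P K T (bt P K M y s) \<le> (M - m)^2 * sqrt K"
proof -
  have "EE P K T (bt P K M y s) = EE P K T (\<lambda>h. bt P K M y s (take (Suc s) h))"
    by (rule EE_cong) (simp add: bt_def yhat_take min_def)
  also have "\<dots> = EE P K (Suc s) (bt P K M y s)"
    by (rule EE_take[where P=P and K=K, OF Ps]) (use s in auto)
  also have "\<dots> = EE P K s (\<lambda>h. \<Sum>a<K. P h a * bt P K M y s (h @ [a]))"
    by (rule EE_Suc)
  also have "\<dots> \<le> EE P K s (\<lambda>_. (M - m)^2 * sqrt K)"
  proof (rule EE_mono[where P=P and K=K, OF Ps])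
    fix h assume h: "h \<in> histories K s"
    hence hs: "set h \<subseteq> {..<K}" and lh: "length h = s" by (auto simp: histories_def)
    have pn: "\<And>a. a < K \<Longrightarrow> 0 \<le> P h a" using Ps[OF hs] simplex_nonneg by blast
    have bsnoc: "bt P K M y s (h @ [a]) = P h a * sqrt (P h a) * ((y (Suc s) a - M) / P h a)^2" if a: "a < K" for a
    proof -
      have "bt P K M y s (h @ [a]) = (\<Sum>c<K. if c = a then P h a * sqrt (P h a) * ((y (Suc s) a - M) / P h a)^2 else 0)"
        unfolding bt_def by (rule sum.cong) (auto simp: yhat_snoc[OF lh] lh)
      thus ?thesis using a by simp
    qed
    have "(\<Sum>a<K. P h a * bt P K M y s (h @ [a])) \<le> (\<Sum>a<K. (M - m)^2 * sqrt (P h a))"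
    proof (rule sum_mono)
      fix a assume "a \<in> {..<K}"
      hence a: "a < K" by simp
      have ym: "(M - y (Suc s) a)^2 \<le> (M - m)^2"
        using ybd[of "Suc s" a] a by (intro power_mono) auto
      show "P h a * bt P K M y s (h @ [a]) \<le> (M - m)^2 * sqrt (P h a)"
      proof (cases "P h a = 0")
        case True thus ?thesis by (simp add: bsnoc[OF a])
      next
        case False
        hence "P h a * bt P K M y s (h @ [a]) = sqrt (P h a) * (y (Suc s) a - M)^2"
          by (simp add: bsnoc[OF a] power_divide field_simps power2_eq_square)
        also have "\<dots> = sqrt (P h a) * (M - y (Suc s) a)^2" by (simp add: power2_commute)
        also have "\<dots> \<le> sqrt (P h a) * (M - m)^2" using ym pn[OF a] by (intro mult_left_mono) auto
        finally show ?thesis by (simp add: mult.commute)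
      qed
    qed
    also have "\<dots> = (M - m)^2 * (\<Sum>a<K. sqrt (P h a))" by (simp add: sum_distrib_left)
    also have "\<dots> \<le> (M - m)^2 * sqrt K"
      using sqrt_sum_le[OF Ps[OF hs]] K2 by (intro mult_left_mono) auto
    finally show "(\<Sum>a<K. P h a * bt P K M y s (h @ [a])) \<le> (M - m)^2 * sqrt K" .
  qed
  also have "\<dots> = (M - m)^2 * sqrt K" by (rule EE_const[where P=P and K=K, OF Ps])
  finally show ?thesis .
qed


lemma main_bound:
  assumes T: "T \<ge> 1"
  shows "regret P K y T \<le> 4 * (M - m) * sqrt (real K * real T) + 2 * (M - m)"
proof -
  define f where "f a = (\<Sum>t=1..T. y t a)" for a
  have "Max (f ` {..<K}) \<in> f ` {..<K}" using K2 by (intro Max_in) (auto simp: lessThan_empty_iff)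
  then obtain u where u: "u < K" and umax: "Max (f ` {..<K}) = f u" by auto
  have er: "exp_reward P K y T = EE P K T (\<lambda>h. \<Sum>s<T. y (Suc s) (h ! s))"
    unfolding exp_reward_def EE_def wt_def by (rule sum.cong) (auto simp: histories_def)
  have fu: "f u \<le> EE P K T (\<lambda>h. \<Sum>s<T. yhat P M y h (Suc s) u)"
  proof -
    have "f u = (\<Sum>s<T. y (Suc s) u)" unfolding f_def by (rule sum_shift1)
    also have "\<dots> \<le> (\<Sum>s<T. EE P K T (\<lambda>h. yhat P M y h (Suc s) u))"
      by (rule sum_mono) (use EE_yhat u in auto)
    also have "\<dots> = EE P K T (\<lambda>h. \<Sum>s<T. yhat P M y h (Suc s) u)" by (rule EE_sum[symmetric])
    finally show ?thesis .
  qed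
  define Z where "Z h = (\<Sum>s<T. yhat P M y h (Suc s) u) - (\<Sum>s<T. \<Sum>a<K. P (take s h) a * yhat P M y h (Suc s) a)" for h
  have reg: "regret P K y T \<le> EE P K T Z"
    unfolding regret_def f_def[symmetric] umax er EE_played Z_def EE_diff using fu by simp
  define S where "S = 2 * (M - m) * sqrt (real K * real T)"
  have S0: "S \<ge> 0" using mM by (simp add: S_def)
  have bnd: "regret P K y T \<le> 2 * (M - m) + sig + S^2 / sig" if sig: "sig > 0" for sig
  proof -
    have "EE P K T Z \<le> EE P K T (\<lambda>h. (2 * (M - m) + sig) + (2 * Dk K / sig) * (\<Sum>s<T. bt P K M y s h))"
    proof (rule EE_mono[where P=P and K=K, OF Ps])
      fix h assume h: "h \<in> histories K T"
      hence hs: "set h \<subseteq> {..<K}" by (simp add: histories_def)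
      define A where "A = 2 * (\<Sum>s<T. Dk K * bt P K M y s h)"
      have A0: "A \<ge> 0" unfolding A_def using bt_nonneg[OF hs] Dk_pos
        by (intro mult_nonneg_nonneg sum_nonneg) auto
      have "Z h \<le> 2 * (Dk K * invlr P K M y h T)" unfolding Z_def by (rule path_regret[OF h T u])
      also have "\<dots> \<le> 2 * ((M - m) + sqrt A)" using path_Lambda[OF h] by (simp add: A_def)
      also have "\<dots> \<le> 2 * ((M - m) + (A + sig^2) / (2 * sig))"
        by (intro mult_left_mono add_left_mono sqrt_le_sigma[OF A0 sig]) auto
      also have "\<dots> = (2 * (M - m) + sig) + (2 * Dk K / sig) * (\<Sum>s<T. bt P K M y s h)"
        using sig by (simp add: A_def sum_distrib_left[symmetric] field_simps power2_eq_square)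
      finally show "Z h \<le> (2 * (M - m) + sig) + (2 * Dk K / sig) * (\<Sum>s<T. bt P K M y s h)" .
    qed
    also have "\<dots> = (2 * (M - m) + sig) + (2 * Dk K / sig) * (\<Sum>s<T. EE P K T (bt P K M y s))"
      by (simp only: EE_add EE_cmult EE_sum EE_const[where P=P and K=K, OF Ps])
    also have "\<dots> \<le> (2 * (M - m) + sig) + (2 * Dk K / sig) * (T * ((M - m)^2 * sqrt K))"
    proof -
      have "(\<Sum>s<T. EE P K T (bt P K M y s)) \<le> (\<Sum>s<T. (M - m)^2 * sqrt K)"
        by (rule sum_mono) (use EE_bt in auto)
      moreover have "2 * Dk K / sig \<ge> 0" using Dk_pos sig by simp
      ultimately show ?thesis by (intro add_left_mono mult_left_mono) auto
    qed
    also have "(2 * Dk K / sig) * (T * ((M - m)^2 * sqrt K)) \<le> S^2 / sig"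
    proof -
      have "Dk K \<le> 2 * sqrt K" by (simp add: Dk_def)
      hence "2 * Dk K * (T * ((M - m)^2 * sqrt K)) \<le> 2 * (2 * sqrt K) * (T * ((M - m)^2 * sqrt K))"
        by (intro mult_right_mono mult_left_mono) auto
      also have "\<dots> = 4 * (M - m)^2 * (real K * real T)"
      proof -
        have "sqrt (real K) * sqrt (real K) = real K" by simp
        thus ?thesis by (simp add: algebra_simps)
      qed
      also have "\<dots> = S^2"
        unfolding S_def by (simp add: power_mult_distrib power2_eq_square algebra_simps)
      finally show ?thesis using sig by (simp add: divide_right_mono)
    qed
    finally show ?thesis using reg by simp
  qed
  have "regret P K y T \<le> 2 * (M - m) + 2 * S"
  proof (cases "S > 0")
    case True
    thus ?thesis using bnd[OF True] by (simp add: power2_eq_square)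
  next
    case False
    hence S: "S = 0" using S0 by simp
    show ?thesis
    proof (rule ccontr)
      assume "\<not> ?thesis"
      hence g: "regret P K y T - 2 * (M - m) > 0" using S by simp
      have "regret P K y T \<le> 2 * (M - m) + (regret P K y T - 2 * (M - m)) / 2"
        using bnd[of "(regret P K y T - 2 * (M - m)) / 2"] g S by simp
      thus False using g by (simp add: field_simps)
    qed
  qed
  thus ?thesis by (simp add: S_def algebra_simps)
qed

end


theorem theorem9:
  fixes K T :: nat and m M :: real and y :: "nat \<Rightarrow> nat \<Rightarrow> real"
    and P :: "nat list \<Rightarrow> nat \<Rightarrow> real"
  assumes "K \<ge> 2"
    and "m \<le> M"
    and "\<And>t a. t \<ge> 1 \<Longrightarrow> a < K \<Longrightarrow> m \<le> y t a \<and> y t a \<le> M"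
    and "T \<ge> 1"
    and "adaftrl P K M y"
  shows "regret P K y T \<le> 4 * (M - m) * sqrt (real K * real T) + 2 * (M - m)"
proof (rule main_bound[where P=P and K=K and M=M and m=m and y=y])
  show "K \<ge> 2" by (rule assms(1))
  show "m \<le> M" by (rule assms(2))
  show "\<And>t a. t \<ge> 1 \<Longrightarrow> a < K \<Longrightarrow> m \<le> y t a \<and> y t a \<le> M" by (rule assms(3))
  show "adaftrl P K M y" by (rule assms(5))
  show "T \<ge> 1" by (rule assms(4))
qed

end
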